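(* Let $S$ be a finite set of states, $B\subseteq S$ a set of accepting states, and $P_\pi : S\times S\to[0,1]$ the (row-stochastic) transition matrix of the Markov chain induced on $S$ by a fixed memoryless policy $\pi$. Fix discount factors $0<\gamma_B<\gamma\le 1$ and define the surrogate reward $R(s)=1-\gamma_B$ and discount $\Gamma(s)=\gamma_B$ for $s\in B$, and $R(s)=0$, $\Gamma(s)=\gamma$ for $s\notin B$. For a path $\sigma=s_0s_1s_2\cdots$ of the chain let $G_t(\sigma)=\lim_{K\to\infty}\sum_{i=0}^{K}R(\sigma[t+i])\prod_{j=0}^{i-1}\Gamma(\sigma[t+j])$, and let $V(s)=\mathbb{E}[G_t(\sigma)\mid \sigma[t]=s]$ be the value function. Define iterates $U_{(k)}\in\mathbb{R}^S$ by $U_{(0)}=0$ and $$U_{(k+1)}(s)=R(s)+\Gamma(s)\sum_{s'\in S}P_\pi(s,s')\,U_{(k)}(s'),\qquad s\in S .$$ Then $U_{(k)}$ converges to $V$, and: (i) if $\gamma<1$, then $\|U_{(k)}-V\|_\infty\le \gamma^k\|V\|_\infty$ for all $k\ge 0$; (ii) if $\gamma=1$, then $\|U_{(k)}-V\|_\infty\le \big(1-(1-\gamma_B)\varepsilon^{n'}\big)^{\lfloor k/(n'+1)\rfloor}\|V\|_\infty$ for all $k\ge 0$, where $\varepsilon>0$ is any number with $P_\pi(s,s')\ge\varepsilon$ for all pairs $(s,s')$ with $P_\pi(s,s')>0$, and $n'=|\neg B_{T,A}|$ is the number of states that are not in $B$ and do not belong to any rejecting bottom strongly connected component.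
   Context: A strongly connected component (communicating class) of a finite Markov chain is a maximal set of states that all communicate with each other; a bottom strongly connected component (BSCC) is one with no transitions leaving it. A BSCC is called rejecting if it contains no state of $B$, and accepting otherwise. Let $\neg B_R$ denote the set of all states lying in rejecting BSCCs of the chain with transition matrix $P_\pi$, and $\neg B_{T,A}=S\setminus(B\cup\neg B_R)$. The setting arises from a Markov decision process with Büchi objective (visit $B$ infinitely often) under a fixed memoryless policy $\pi$, with $P_\pi(s,s')=P(s,\pi(s),s')$. *)

theory Defs
  imports Complex_Main
begin

definition stochastic :: "('s::finite \<Rightarrow> 's \<Rightarrow> real) \<Rightarrow> bool" where
  "stochastic P \<longleftrightarrow> (\<forall>s s'. 0 \<le> P s s' \<and> P s s' \<le> 1) \<and> (\<forall>s. (\<Sum>s'\<in>UNIV. P s s') = 1)"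

definition rew :: "'s set \<Rightarrow> real \<Rightarrow> 's \<Rightarrow> real" where
  "rew B gB s = (if s \<in> B then 1 - gB else 0)"

definition disc :: "'s set \<Rightarrow> real \<Rightarrow> real \<Rightarrow> 's \<Rightarrow> real" where
  "disc B gB g s = (if s \<in> B then gB else g)"

definition ret_trunc :: "'s set \<Rightarrow> real \<Rightarrow> real \<Rightarrow> nat \<Rightarrow> 's list \<Rightarrow> real" where
  "ret_trunc B gB g K w =
     (\<Sum>i\<le>K. rew B gB (w ! i) * (\<Prod>j<i. disc B gB g (w ! j)))"

definition path_prob :: "('s \<Rightarrow> 's \<Rightarrow> real) \<Rightarrow> 's list \<Rightarrow> real" where
  "path_prob P w = (\<Prod>j<length w - 1. P (w ! j) (w ! Suc j))"

text \<open>Expected truncated return E[G^K | sigma_0 = s]: the truncated return depends only on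
  the first K+1 states, so its expectation is the sum over all paths of length K+1 from s.\<close>
definition exp_ret_trunc :: "('s::finite \<Rightarrow> 's \<Rightarrow> real) \<Rightarrow> 's set \<Rightarrow> real \<Rightarrow> real \<Rightarrow> nat \<Rightarrow> 's \<Rightarrow> real" where
  "exp_ret_trunc P B gB g K s =
     (\<Sum>xs\<in>{xs. length xs = K}. path_prob P (s # xs) * ret_trunc B gB g K (s # xs))"

text \<open>Value function V(s) = E[G | sigma_0 = s] = lim_K E[G^K | sigma_0 = s]
  (monotone convergence: the truncated returns are nonnegative and increasing in K).\<close>
definition value_fun :: "('s::finite \<Rightarrow> 's \<Rightarrow> real) \<Rightarrow> 's set \<Rightarrow> real \<Rightarrow> real \<Rightarrow> 's \<Rightarrow> real" where
  "value_fun P B gB g s = lim (\<lambda>K. exp_ret_trunc P B gB g K s)"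

fun U_iter :: "('s::finite \<Rightarrow> 's \<Rightarrow> real) \<Rightarrow> 's set \<Rightarrow> real \<Rightarrow> real \<Rightarrow> nat \<Rightarrow> 's \<Rightarrow> real" where
  "U_iter P B gB g 0 s = 0"
| "U_iter P B gB g (Suc k) s =
     rew B gB s + disc B gB g s * (\<Sum>s'\<in>UNIV. P s s' * U_iter P B gB g k s')"

definition sup_norm :: "('s::finite \<Rightarrow> real) \<Rightarrow> real" where
  "sup_norm f = Max (range (\<lambda>s. \<bar>f s\<bar>))"

definition edges :: "('s \<Rightarrow> 's \<Rightarrow> real) \<Rightarrow> ('s \<times> 's) set" where
  "edges P = {(s, s'). P s s' > 0}"

definition is_scc :: "('s \<Rightarrow> 's \<Rightarrow> real) \<Rightarrow> 's set \<Rightarrow> bool" where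
  "is_scc P C \<longleftrightarrow> C \<noteq> {} \<and>
     (\<forall>x\<in>C. \<forall>y\<in>C. (x, y) \<in> (edges P)\<^sup>*) \<and>
     (\<forall>x\<in>C. \<forall>y. (x, y) \<in> (edges P)\<^sup>* \<and> (y, x) \<in> (edges P)\<^sup>* \<longrightarrow> y \<in> C)"

definition is_bscc :: "('s \<Rightarrow> 's \<Rightarrow> real) \<Rightarrow> 's set \<Rightarrow> bool" where
  "is_bscc P C \<longleftrightarrow> is_scc P C \<and> (\<forall>x\<in>C. \<forall>y. (x, y) \<in> edges P \<longrightarrow> y \<in> C)"

definition rej_bscc_states :: "('s \<Rightarrow> 's \<Rightarrow> real) \<Rightarrow> 's set \<Rightarrow> 's set" where
  "rej_bscc_states P B = \<Union>{C. is_bscc P C \<and> C \<inter> B = {}}"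

definition notB_TA :: "('s \<Rightarrow> 's \<Rightarrow> real) \<Rightarrow> 's set \<Rightarrow> 's set" where
  "notB_TA P B = UNIV - (B \<union> rej_bscc_states P B)"

end

theory Submission imports Defs begin

lemma pp_cons: "path_prob P (s # y # ys) = P s y * path_prob P (y # ys)"
  unfolding path_prob_def by (simp del: prod.lessThan_Suc add: prod.lessThan_Suc_shift)

lemma rt_cons: "ret_trunc B gB g (Suc K) (s # w) = rew B gB s + disc B gB g s * ret_trunc B gB g K w"
  unfolding ret_trunc_def
  by (simp del: sum.atMost_Suc prod.lessThan_Suc add: sum.atMost_Suc_shift prod.lessThan_Suc_shift sum_distrib_left mult_ac)

lemma sum_lists_Suc:
  "(\<Sum>xs\<in>{xs. length xs = Suc K}. f xs) = (\<Sum>y\<in>(UNIV::'s::finite set). \<Sum>ys\<in>{ys. length ys = K}. f (y # ys))"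
proof -
  have eq: "{xs. length xs = Suc K} = (\<lambda>(y, ys). y # ys) ` (UNIV \<times> {ys::'s list. length ys = K})"
    by (auto simp: image_iff length_Suc_conv)
  have inj: "inj_on (\<lambda>(y, ys). y # ys) (UNIV \<times> {ys::'s list. length ys = K})"
    by (auto simp: inj_on_def)
  show ?thesis
    unfolding eq sum.reindex[OF inj] by (simp add: sum.cartesian_product split_def)
qed

lemma pp_sum:
  assumes "stochastic P"
  shows "(\<Sum>ys\<in>{ys. length ys = K}. path_prob P (y # ys)) = 1"
proof (induction K arbitrary: y)
  case 0
  then show ?case by (simp add: path_prob_def)
next
  case (Suc K)
  have "(\<Sum>ys\<in>{ys. length ys = Suc K}. path_prob P (y # ys))
      = (\<Sum>z\<in>UNIV. \<Sum>zs\<in>{zs. length zs = K}. P y z * path_prob P (z # zs))"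
    by (simp add: sum_lists_Suc pp_cons)
  also have "\<dots> = (\<Sum>z\<in>UNIV. P y z)"
    by (simp add: sum_distrib_left[symmetric] Suc)
  also have "\<dots> = 1" using assms by (simp add: stochastic_def)
  finally show ?case .
qed

lemma exp_U:
  assumes "stochastic P"
  shows "exp_ret_trunc P B gB g K s = U_iter P B gB g (Suc K) s"
proof (induction K arbitrary: s)
  case 0
  then show ?case by (simp add: exp_ret_trunc_def path_prob_def ret_trunc_def)
next
  case (Suc K)
  have "exp_ret_trunc P B gB g (Suc K) s
     = (\<Sum>y\<in>UNIV. \<Sum>ys\<in>{ys. length ys = K}. P s y * path_prob P (y # ys) *
          (rew B gB s + disc B gB g s * ret_trunc B gB g K (y # ys)))"
    unfolding exp_ret_trunc_def by (simp add: sum_lists_Suc pp_cons rt_cons)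
  also have "\<dots> = (\<Sum>y\<in>UNIV. P s y * (rew B gB s * (\<Sum>ys\<in>{ys. length ys = K}. path_prob P (y # ys))
         + disc B gB g s * exp_ret_trunc P B gB g K y))"
    unfolding exp_ret_trunc_def
    by (simp add: algebra_simps sum_distrib_left sum.distrib)
  also have "\<dots> = (\<Sum>y\<in>UNIV. P s y * (rew B gB s + disc B gB g s * U_iter P B gB g (Suc K) y))"
    by (simp add: pp_sum[OF assms] Suc)
  also have "\<dots> = rew B gB s * (\<Sum>y\<in>UNIV. P s y) + disc B gB g s * (\<Sum>y\<in>UNIV. P s y * U_iter P B gB g (Suc K) y)"
    by (simp add: algebra_simps sum_distrib_left sum.distrib)
  also have "\<dots> = U_iter P B gB g (Suc (Suc K)) s"
    using assms by (simp add: stochastic_def)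
  finally show ?case .
qed


lemma graph_bscc:
  fixes P :: "'s::finite \<Rightarrow> 's \<Rightarrow> real"
  assumes cl: "\<forall>x\<in>C. \<forall>y. P x y > 0 \<longrightarrow> y \<in> C" and ne: "C \<noteq> {}" and dis: "C \<inter> B = {}"
  shows "C \<inter> rej_bscc_states P B \<noteq> {}"
proof -
  define reach where "reach x = {y. (x, y) \<in> (edges P)\<^sup>*}" for x
  have clr: "y \<in> C" if "(x, y) \<in> (edges P)\<^sup>*" "x \<in> C" for x y
    using that(1,2) by (induction rule: rtrancl_induct) (use cl in \<open>auto simp: edges_def\<close>)
  obtain x0 where "x0 \<in> C" using ne by blast
  then obtain s where sC: "s \<in> C" and smin: "\<forall>t. t \<in> C \<longrightarrow> card (reach s) \<le> card (reach t)"
    using ex_has_least_nat[of "\<lambda>x. x \<in> C" x0 "\<lambda>x. card (reach x)"] by blast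
  have same: "reach t = reach s" if "t \<in> reach s" for t
  proof -
    have sub: "reach t \<subseteq> reach s" using that unfolding reach_def
      by (auto intro: rtrancl_trans)
    have "t \<in> C" using that sC clr unfolding reach_def by blast
    then have "card (reach s) \<le> card (reach t)" using smin by blast
    then show ?thesis using card_seteq[OF finite sub] by blast
  qed
  have sK: "s \<in> reach s" unfolding reach_def by simp
  have bscc: "is_bscc P (reach s)"
    unfolding is_bscc_def is_scc_def
  proof (intro conjI ballI allI impI)
    show "reach s \<noteq> {}" using sK by blast
  next
    fix x y assume "x \<in> reach s" "y \<in> reach s"
    then show "(x, y) \<in> (edges P)\<^sup>*" using same unfolding reach_def by blast
  next
    fix x y assume "x \<in> reach s" "(x, y) \<in> (edges P)\<^sup>* \<and> (y, x) \<in> (edges P)\<^sup>*"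
    then show "y \<in> reach s" using same[of x] unfolding reach_def by blast
  next
    fix x y assume "x \<in> reach s" "(x, y) \<in> edges P"
    then show "y \<in> reach s" using same[of x] unfolding reach_def by blast
  qed
  have "reach s \<subseteq> C" using clr sC unfolding reach_def by blast
  then have "reach s \<inter> B = {}" using dis by blast
  then have "s \<in> rej_bscc_states P B" using bscc sK unfolding rej_bscc_states_def by blast
  then show ?thesis using sC by blast
qed

fun Gs :: "('s \<Rightarrow> 's \<Rightarrow> real) \<Rightarrow> 's set \<Rightarrow> nat \<Rightarrow> 's set" where
  "Gs P A 0 = A"
| "Gs P A (Suc j) = Gs P A j \<union> {s. \<exists>t\<in>Gs P A j. P s t > 0}"

lemma Gs_mono: "i \<le> j \<Longrightarrow> Gs P A i \<subseteq> Gs P A j"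
  by (rule lift_Suc_mono_le[of "Gs P A"]) auto

lemma Gs_stable:
  fixes P :: "'s::finite \<Rightarrow> 's \<Rightarrow> real"
  assumes "Gs P (B \<union> rej_bscc_states P B) (Suc j) = Gs P (B \<union> rej_bscc_states P B) j"
  shows "Gs P (B \<union> rej_bscc_states P B) j = UNIV"
proof (rule ccontr)
  let ?G = "Gs P (B \<union> rej_bscc_states P B) j"
  assume "?G \<noteq> UNIV"
  then have ne: "UNIV - ?G \<noteq> {}" by blast
  have G0: "B \<union> rej_bscc_states P B \<subseteq> ?G" using Gs_mono[of 0 j P "B \<union> rej_bscc_states P B"] by simp
  have cl: "\<forall>x\<in>UNIV - ?G. \<forall>y. P x y > 0 \<longrightarrow> y \<in> UNIV - ?G"
    using assms by auto
  have "(UNIV - ?G) \<inter> B = {}" using G0 by blast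
  from graph_bscc[OF cl ne this] G0 show False by blast
qed

lemma Gs_full:
  fixes P :: "'s::finite \<Rightarrow> 's \<Rightarrow> real"
  shows "Gs P (B \<union> rej_bscc_states P B) (card (notB_TA P B)) = UNIV"
proof -
  let ?A = "B \<union> rej_bscc_states P B"
  have cnt: "Gs P ?A j = UNIV \<or> card ?A + j \<le> card (Gs P ?A j)" for j
  proof (induction j)
    case 0 then show ?case by simp
  next
    case (Suc j)
    show ?case
    proof (cases "Gs P ?A j = UNIV")
      case True
      then show ?thesis using Gs_mono[of j "Suc j" P ?A] by auto
    next
      case False
      then have "Gs P ?A (Suc j) \<noteq> Gs P ?A j" using Gs_stable by blast
      then have "Gs P ?A j \<subset> Gs P ?A (Suc j)" using Gs_mono[of j "Suc j" P ?A] by auto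
      then have "card (Gs P ?A j) < card (Gs P ?A (Suc j))" by (simp add: psubset_card_mono)
      then show ?thesis using Suc False by auto
    qed
  qed
  have "card (notB_TA P B) = card (UNIV::'s set) - card ?A"
    unfolding notB_TA_def by (simp add: card_Diff_subset)
  moreover have "card ?A \<le> card (UNIV::'s set)" by (simp add: card_mono)
  ultimately have "card ?A + card (notB_TA P B) = card (UNIV::'s set)" by simp
  then show ?thesis using cnt[of "card (notB_TA P B)"]
    by (metis card_seteq finite subset_UNIV)
qed


context
  fixes P :: "'s::finite \<Rightarrow> 's \<Rightarrow> real" and B :: "'s set" and gB g :: real
  assumes st: "stochastic P" and gB0: "0 < gB" and gBg: "gB < g" and g1: "g \<le> 1"
begin

abbreviation "U \<equiv> U_iter P B gB g"
abbreviation "V \<equiv> value_fun P B gB g"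
abbreviation "R \<equiv> rej_bscc_states P B"

lemma P_nn: "0 \<le> P s t" using st by (simp add: stochastic_def)
lemma P_sum: "(\<Sum>t\<in>UNIV. P s t) = 1" using st by (simp add: stochastic_def)

lemma disc_nn: "0 \<le> disc B gB g s" using gB0 gBg by (simp add: disc_def)
lemma disc_le: "disc B gB g s \<le> g" using gB0 gBg by (simp add: disc_def)
lemma disc_le1: "disc B gB g s \<le> 1" using disc_le g1 by (meson order_trans)

lemma wsum_le:
  assumes "\<And>t. f t \<le> M"
  shows "(\<Sum>t\<in>UNIV. P s t * f t) \<le> M"
proof -
  have "(\<Sum>t\<in>UNIV. P s t * f t) \<le> (\<Sum>t\<in>UNIV. P s t * M)"
    by (intro sum_mono mult_left_mono assms P_nn)
  also have "\<dots> = M" by (simp add: sum_distrib_right[symmetric] P_sum)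
  finally show ?thesis .
qed

lemma wsum_nn:
  assumes "\<And>t. 0 \<le> f t"
  shows "0 \<le> (\<Sum>t\<in>UNIV. P s t * f t)"
  by (intro sum_nonneg mult_nonneg_nonneg assms P_nn)

lemma U_bounds: "0 \<le> U k s \<and> U k s \<le> 1"
proof (induction k arbitrary: s)
  case 0 then show ?case by simp
next
  case (Suc k)
  have a: "0 \<le> (\<Sum>t\<in>UNIV. P s t * U k t)" using Suc by (intro wsum_nn) blast
  have b: "(\<Sum>t\<in>UNIV. P s t * U k t) \<le> 1" using Suc by (intro wsum_le) blast
  have c: "disc B gB g s * (\<Sum>t\<in>UNIV. P s t * U k t) \<le> disc B gB g s"
    using a b disc_nn by (simp add: mult_left_le)
  have d: "0 \<le> disc B gB g s * (\<Sum>t\<in>UNIV. P s t * U k t)"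
    using a disc_nn by simp
  have e: "rew B gB s + disc B gB g s \<le> 1" "0 \<le> rew B gB s"
    using gB0 gBg g1 by (auto simp: rew_def disc_def)
  have "U (Suc k) s = rew B gB s + disc B gB g s * (\<Sum>t\<in>UNIV. P s t * U k t)" by simp
  then show ?case using c d e by linarith
qed

lemma U_mono: "U k s \<le> U (Suc k) s"
proof (induction k arbitrary: s)
  case 0 then show ?case using U_bounds[of 1 s] by simp
next
  case (Suc k)
  have "(\<Sum>t\<in>UNIV. P s t * U k t) \<le> (\<Sum>t\<in>UNIV. P s t * U (Suc k) t)"
    by (intro sum_mono mult_left_mono Suc P_nn)
  then have "disc B gB g s * (\<Sum>t\<in>UNIV. P s t * U k t) \<le> disc B gB g s * (\<Sum>t\<in>UNIV. P s t * U (Suc k) t)"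
    by (rule mult_left_mono[OF _ disc_nn])
  then show ?case by simp
qed

lemma U_lim: "(\<lambda>k. U k s) \<longlonglongrightarrow> V s"
proof -
  have inc: "incseq (\<lambda>k. U k s)" using U_mono by (simp add: incseq_SucI)
  have bd: "\<forall>i. U i s \<le> 1" using U_bounds by blast
  obtain L where L: "(\<lambda>k. U k s) \<longlonglongrightarrow> L"
    using incseq_convergent[OF inc bd] by blast
  have eq: "(\<lambda>K. exp_ret_trunc P B gB g K s) = (\<lambda>K. U (Suc K) s)"
    by (rule ext) (rule exp_U[OF st])
  have "(\<lambda>K. exp_ret_trunc P B gB g K s) \<longlonglongrightarrow> L"
    unfolding eq by (rule LIMSEQ_Suc[OF L])
  then have "V s = L" unfolding value_fun_def by (rule limI)
  then show ?thesis using L by simp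
qed

lemma U_le_V: "U k s \<le> V s"
  using U_lim[of s] U_mono
  by (intro incseq_le) (auto simp: incseq_SucI)

lemma V_fix: "V s = rew B gB s + disc B gB g s * (\<Sum>t\<in>UNIV. P s t * V t)"
proof -
  have "(\<lambda>k. U (Suc k) s) \<longlonglongrightarrow> V s" using LIMSEQ_Suc[OF U_lim] .
  moreover have "(\<lambda>k. U (Suc k) s) \<longlonglongrightarrow> rew B gB s + disc B gB g s * (\<Sum>t\<in>UNIV. P s t * V t)"
    unfolding U_iter.simps
    by (intro tendsto_intros U_lim)
  ultimately show ?thesis by (rule LIMSEQ_unique)
qed

lemma D_step: "V s - U (Suc k) s = disc B gB g s * (\<Sum>t\<in>UNIV. P s t * (V t - U k t))"
proof -
  have a: "(\<Sum>t\<in>UNIV. P s t * (V t - U k t)) = (\<Sum>t\<in>UNIV. P s t * V t) - (\<Sum>t\<in>UNIV. P s t * U k t)"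
    by (simp add: right_diff_distrib sum_subtractf)
  have b: "U (Suc k) s = rew B gB s + disc B gB g s * (\<Sum>t\<in>UNIV. P s t * U k t)" by simp
  show ?thesis unfolding a b using V_fix[of s] by (simp add: right_diff_distrib)
qed

lemma V_le_norm: "V s \<le> sup_norm V"
  unfolding sup_norm_def
  by (rule order_trans[OF abs_ge_self]) (rule Max_ge, auto)

lemma norm_le:
  assumes "\<And>s. \<bar>f s\<bar> \<le> X"
  shows "sup_norm f \<le> X"
  unfolding sup_norm_def using assms by (subst Max_le_iff) auto

lemma D_norm:
  assumes "\<And>s. V s - U k s \<le> X"
  shows "sup_norm (\<lambda>s. U k s - V s) \<le> X"
proof (rule norm_le)
  fix s
  have "U k s \<le> V s" by (rule U_le_V)
  then have "\<bar>U k s - V s\<bar> = V s - U k s" by simp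
  then show "\<bar>U k s - V s\<bar> \<le> X" using assms[of s] by simp
qed

lemma part1: "sup_norm (\<lambda>s. U k s - V s) \<le> g ^ k * sup_norm V"
proof -
  have "V s - U k s \<le> g ^ k * sup_norm V" for s
  proof (induction k arbitrary: s)
    case 0 then show ?case using V_le_norm by simp
  next
    case (Suc k)
    have a: "(\<Sum>t\<in>UNIV. P s t * (V t - U k t)) \<le> g ^ k * sup_norm V"
      using Suc by (intro wsum_le) blast
    have b: "0 \<le> (\<Sum>t\<in>UNIV. P s t * (V t - U k t))"
      using U_le_V by (intro wsum_nn) simp
    have "V s - U (Suc k) s \<le> g * (\<Sum>t\<in>UNIV. P s t * (V t - U k t))"
      unfolding D_step using disc_le b by (rule mult_right_mono)
    also have "\<dots> \<le> g * (g ^ k * sup_norm V)"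
      using a gB0 gBg by (intro mult_left_mono) auto
    finally show ?case by simp
  qed
  then show ?thesis by (rule D_norm)
qed


lemma R_closed: "s \<in> R \<Longrightarrow> P s t > 0 \<Longrightarrow> t \<in> R"
  unfolding rej_bscc_states_def is_bscc_def edges_def by blast

lemma R_notB: "s \<in> R \<Longrightarrow> s \<notin> B"
  unfolding rej_bscc_states_def by blast

lemma U_R: "s \<in> R \<Longrightarrow> U k s = 0"
proof (induction k arbitrary: s)
  case 0 then show ?case by simp
next
  case (Suc k)
  have "P s t * U k t = 0" for t
  proof (cases "P s t > 0")
    case True then show ?thesis using Suc R_closed by simp
  next
    case False then have "P s t = 0" using P_nn[of s t] by simp
    then show ?thesis by simp
  qed
  then have "(\<Sum>t\<in>UNIV. P s t * U k t) = 0" by (intro sum.neutral) blast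
  then show ?case using R_notB[OF Suc.prems] by (simp add: rew_def)
qed

lemma V_R: "s \<in> R \<Longrightarrow> V s = 0"
proof -
  assume "s \<in> R"
  then have "(\<lambda>k. U k s) = (\<lambda>k. 0)" using U_R by auto
  then have "(\<lambda>k. U k s) \<longlonglongrightarrow> 0" by simp
  then show "V s = 0" using U_lim[of s] LIMSEQ_unique by blast
qed

lemma key:
  fixes y :: "nat \<Rightarrow> 's \<Rightarrow> real"
  assumes e0: "0 < \<epsilon>" and e1: "\<epsilon> \<le> 1" and eP: "\<forall>s t. P s t > 0 \<longrightarrow> P s t \<ge> \<epsilon>"
    and rec: "\<And>i s. y (Suc i) s = disc B gB g s * (\<Sum>t\<in>UNIV. P s t * y i t)"
    and bnd: "\<And>i s. 0 \<le> y i s \<and> y i s \<le> M"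
    and zero: "\<And>i s. s \<in> R \<Longrightarrow> y i s = 0"
  shows "s \<in> Gs P (B \<union> R) j \<Longrightarrow> j \<le> m \<Longrightarrow> y (Suc m) s \<le> (1 - (1 - gB) * \<epsilon> ^ j) * M"
proof (induction j arbitrary: s m)
  case 0
  have M0: "0 \<le> M" using bnd[of 0 s] by linarith
  show ?case
  proof (cases "s \<in> B")
    case True
    have "(\<Sum>t\<in>UNIV. P s t * y m t) \<le> M" using bnd by (intro wsum_le) blast
    then have "gB * (\<Sum>t\<in>UNIV. P s t * y m t) \<le> gB * M" using gB0 by simp
    then show ?thesis using True by (simp add: rec disc_def)
  next
    case False
    then have "s \<in> R" using 0 by simp
    then show ?thesis using zero[of s "Suc m"] M0 gB0 by simp
  qed
next
  case (Suc j)
  have M0: "0 \<le> M" using bnd[of 0 s] by linarith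
  have gB1: "gB < 1" using gBg g1 by simp
  have ej: "0 \<le> \<epsilon> ^ j" using e0 by simp
  show ?case
  proof (cases "s \<in> Gs P (B \<union> R) j")
    case True
    then have "y (Suc m) s \<le> (1 - (1 - gB) * \<epsilon> ^ j) * M" using Suc by simp
    also have "\<dots> \<le> (1 - (1 - gB) * \<epsilon> ^ Suc j) * M"
    proof (rule mult_right_mono[OF _ M0])
      have "\<epsilon> ^ Suc j \<le> \<epsilon> ^ j" using e0 e1 by (simp add: mult_left_le_one_le)
      then show "1 - (1 - gB) * \<epsilon> ^ j \<le> 1 - (1 - gB) * \<epsilon> ^ Suc j"
        using gB1 by (simp add: mult_left_mono)
    qed
    finally show ?thesis .
  next
    case False
    then obtain t where tG: "t \<in> Gs P (B \<union> R) j" and Pst: "P s t > 0" using Suc.prems by auto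
    obtain m' where m': "m = Suc m'" "j \<le> m'" using Suc.prems by (cases m) auto
    define a where "a = (1 - gB) * \<epsilon> ^ j"
    have a0: "0 \<le> a" using gB1 ej by (simp add: a_def)
    have yt: "y m t \<le> (1 - a) * M" using Suc.IH[OF tG m'(2)] m'(1) by (simp add: a_def)
    have le: "y m u \<le> M - (if u = t then a * M else 0)" for u
      using yt bnd[of m u] by (auto simp: algebra_simps)
    have "(\<Sum>u\<in>UNIV. P s u * y m u) \<le> (\<Sum>u\<in>UNIV. P s u * (M - (if u = t then a * M else 0)))"
      by (intro sum_mono mult_left_mono le P_nn)
    also have "\<dots> = M - P s t * (a * M)"
      by (simp add: right_diff_distrib sum_subtractf sum_distrib_right[symmetric] P_sum if_distrib[of "\<lambda>x. P s _ * x"] cong: if_cong)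
    also have "\<dots> \<le> M - \<epsilon> * (a * M)"
      using eP Pst a0 M0 by (intro diff_left_mono mult_right_mono) auto
    also have "\<dots> = (1 - (1 - gB) * \<epsilon> ^ Suc j) * M" by (simp add: a_def algebra_simps)
    finally have S: "(\<Sum>u\<in>UNIV. P s u * y m u) \<le> (1 - (1 - gB) * \<epsilon> ^ Suc j) * M" .
    have S0: "0 \<le> (\<Sum>u\<in>UNIV. P s u * y m u)" using bnd by (intro wsum_nn) blast
    have "y (Suc m) s \<le> (\<Sum>u\<in>UNIV. P s u * y m u)"
      unfolding rec using S0 disc_le1 disc_nn by (simp add: mult_left_le_one_le)
    then show ?thesis using S by linarith
  qed
qed


lemma part2:
  assumes e0: "0 < \<epsilon>" and eP: "\<forall>s t. P s t > 0 \<longrightarrow> P s t \<ge> \<epsilon>"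
  shows "sup_norm (\<lambda>s. U k s - V s)
     \<le> (1 - (1 - gB) * \<epsilon> ^ card (notB_TA P B)) ^ (k div (card (notB_TA P B) + 1)) * sup_norm V"
proof -
  define n where "n = card (notB_TA P B)"
  define c where "c = 1 - (1 - gB) * \<epsilon> ^ n"
  define Mv where "Mv = sup_norm V"
  have e1: "\<epsilon> \<le> 1"
  proof -
    obtain s0 :: 's where True by blast
    have "\<exists>t. P s0 t \<noteq> 0" using P_sum[of s0] by (metis (no_types) sum.neutral zero_neq_one)
    then obtain t where "P s0 t > 0" using P_nn[of s0] by (metis order_neq_le_trans)
    moreover have "P s0 t \<le> 1" using st by (simp add: stochastic_def)
    ultimately show ?thesis using eP by force
  qed
  have full: "Gs P (B \<union> R) n = UNIV" unfolding n_def by (rule Gs_full)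
  have Dmono: "V s - U k' s \<le> V s - U k s" if "k \<le> k'" for k k' s
    using lift_Suc_mono_le[of "\<lambda>k. U k s", OF U_mono that] by simp
  have claim: "\<forall>k s. q * Suc n \<le> k \<longrightarrow> V s - U k s \<le> c ^ q * Mv" for q
  proof (induction q)
    case 0
    show ?case
    proof (intro allI impI)
      fix k s
      have "0 \<le> U k s" using U_bounds by blast
      moreover have "V s \<le> Mv" unfolding Mv_def by (rule V_le_norm)
      ultimately show "V s - U k s \<le> c ^ 0 * Mv" by simp
    qed
  next
    case (Suc q)
    show ?case
    proof (intro allI impI)
      fix k s assume k: "Suc q * Suc n \<le> k"
      define b where "b = k - Suc n"
      have bq: "q * Suc n \<le> b" using k by (simp add: b_def)
      define y where "y i s = V s - U (b + i) s" for i s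
      have rec: "y (Suc i) s = disc B gB g s * (\<Sum>t\<in>UNIV. P s t * y i t)" for i s
        unfolding y_def using D_step[of s "b + i"] by simp
      have bnd: "0 \<le> y i s \<and> y i s \<le> c ^ q * Mv" for i s
        using U_le_V[of "b + i" s] Dmono[of b "b + i" s] Suc[rule_format, OF bq, of s]
        unfolding y_def by auto
      have zero: "y i s = 0" if "s \<in> R" for i s
        unfolding y_def using that U_R V_R by simp
      have "y (Suc n) s \<le> (1 - (1 - gB) * \<epsilon> ^ n) * (c ^ q * Mv)"
        by (rule key[of \<epsilon> y "c ^ q * Mv" s n n, OF e0 e1 eP rec bnd zero]) (auto simp: full)
      moreover have "y (Suc n) s = V s - U k s" unfolding y_def b_def using k by simp
      ultimately show "V s - U k s \<le> c ^ Suc q * Mv" by (simp add: c_def)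
    qed
  qed
  have c0: "0 \<le> c" unfolding c_def
  proof -
    have "\<epsilon> ^ n \<le> 1" using e0 e1 by (simp add: power_le_one)
    then have "(1 - gB) * \<epsilon> ^ n \<le> 1 - gB" using gBg g1 by (simp add: mult_left_le)
    then show "0 \<le> 1 - (1 - gB) * \<epsilon> ^ n" using gB0 by linarith
  qed
  have "V s - U k s \<le> c ^ (k div Suc n) * Mv" for s
  proof -
    have "k div Suc n * Suc n \<le> k" by (rule div_times_less_eq_dividend)
    then show ?thesis using claim[of "k div Suc n"] by blast
  qed
  then show ?thesis unfolding Mv_def c_def n_def by (intro D_norm) simp
qed
end


theorem theorem1:
  fixes P :: "'s::finite \<Rightarrow> 's \<Rightarrow> real" and B :: "'s set" and gB g :: real
  assumes "stochastic P"
    and "0 < gB" and "gB < g" and "g \<le> 1"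
  shows "(\<forall>s. (\<lambda>k. U_iter P B gB g k s) \<longlonglongrightarrow> value_fun P B gB g s)
    \<and> (g < 1 \<longrightarrow> (\<forall>k. sup_norm (\<lambda>s. U_iter P B gB g k s - value_fun P B gB g s)
                         \<le> g ^ k * sup_norm (value_fun P B gB g)))
    \<and> (g = 1 \<longrightarrow> (\<forall>\<epsilon>::real. \<epsilon> > 0 \<longrightarrow> (\<forall>s s'. P s s' > 0 \<longrightarrow> P s s' \<ge> \<epsilon>) \<longrightarrow>
         (\<forall>k. sup_norm (\<lambda>s. U_iter P B gB g k s - value_fun P B gB g s)
              \<le> (1 - (1 - gB) * \<epsilon> ^ card (notB_TA P B)) ^ (k div (card (notB_TA P B) + 1))
                 * sup_norm (value_fun P B gB g))))"
  using U_lim[OF assms] part1[OF assms] part2[OF assms] by blast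
end
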